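(* Let $G$ be a finite group, $\Theta=\sum_{H\le G}n_HH$ a $G$-Brauer relation, and $M$ a finite $\mathbb{Z}[G]$-module. Then \[\frac{\mathcal C_\Theta(M)}{\mathcal C_\Theta(M^\vee)}=\left(\frac{\hat h^{-1}(\Theta,M)}{\hat h^0(\Theta,M)}\right)^2.\]
   Context: Let $G$ be a finite group. A $G$-Brauer relation is a formal sum $\Theta=\sum_{H\le G}n_HH$ over subgroups $H\le G$, $n_H\in\mathbb{Z}$, such that $\bigoplus_{n_H>0}\mathbb{Q}[G/H]^{n_H}\cong\bigoplus_{n_H<0}\mathbb{Q}[G/H]^{-n_H}$ as $\mathbb{Q}[G]$-modules. For a finitely generated $\mathbb{Z}[G]$-module $M$, write $M_{\mathrm{tors}}$ for its $\mathbb{Z}$-torsion subgroup and $M_{\mathrm{tf}}=M/M_{\mathrm{tors}}$. The regulator constant is \[\mathcal C_\Theta(M)=\prod_{H\le G}\Bigl(|M_{\mathrm{tors}}^H|^{-2}\det\bigl(\tfrac{1}{|H|}\langle\cdot,\cdot\rangle|_{(M^H)_{\mathrm{tf}}}\bigr)\Bigr)^{n_H}\in\mathbb{Q}^\times,\] where $\langle\cdot,\cdot\rangle:M\times M\to\mathscr L$ is any $G$-invariant $\mathbb{Z}$-bilinear pairing into a field $\mathscr L\supseteq\mathbb{Q}$ that is non-degenerate on $M_{\mathrm{tf}}$, and the determinant is computed on a $\mathbb{Z}$-basis of $(M^H)_{\mathrm{tf}}$ (the value is independent of the choice of pairing and is positive; for finite $M$ it equals $\prod_H|M^H|^{-2n_H}$).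 For $i\in\mathbb{Z}$ and $H\le G$, $\hat H^i(H,M)$ denotes Tate cohomology, $\hat h^i(H,M)=|\hat H^i(H,M)|$, and $\hat h^i(\Theta,M)=\prod_{H\le G}\hat h^i(H,M)^{n_H}$. For finite $M$, $M^\vee=\mathrm{Hom}(M,\mathbb{Q}/\mathbb{Z})$ with $G$-action $(g\psi)(m)=\psi(g^{-1}m)$. *)

theory Defs
  imports Complex_Main "HOL-Algebra.Coset"
begin

definition qz_rel :: "rat \<Rightarrow> rat \<Rightarrow> bool" where
  "qz_rel x y \<longleftrightarrow> x - y \<in> \<int>"

quotient_type qz = rat / qz_rel
proof (rule equivpI)
  show "reflp qz_rel" by (rule reflpI) (simp add: qz_rel_def)
  show "symp qz_rel"
    by (rule sympI) (metis Ints_minus minus_diff_eq qz_rel_def)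
  show "transp qz_rel"
    by (rule transpI) (metis Ints_add diff_add_cancel add_diff_eq qz_rel_def)
qed

lift_definition qz_add :: "qz \<Rightarrow> qz \<Rightarrow> qz" is "(+)"
  unfolding qz_rel_def
  by (metis Ints_add add_diff_add)

definition is_ZG_module ::
  "('a, 'b) monoid_scheme \<Rightarrow> ('a \<Rightarrow> 'm::ab_group_add \<Rightarrow> 'm) \<Rightarrow> bool" where
  "is_ZG_module G act \<longleftrightarrow>
     (\<forall>g\<in>carrier G. \<forall>x y. act g (x + y) = act g x + act g y) \<and>
     (\<forall>x. act \<one>\<^bsub>G\<^esub> x = x) \<and>
     (\<forall>g\<in>carrier G. \<forall>h\<in>carrier G. \<forall>x. act (g \<otimes>\<^bsub>G\<^esub> h) x = act g (act h x))"

definition fixpts :: "('a \<Rightarrow> 'm \<Rightarrow> 'm) \<Rightarrow> 'a set \<Rightarrow> 'm set" where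
  "fixpts act H = {m. \<forall>h\<in>H. act h m = m}"

definition normH :: "('a \<Rightarrow> 'm::ab_group_add \<Rightarrow> 'm) \<Rightarrow> 'a set \<Rightarrow> 'm \<Rightarrow> 'm" where
  "normH act H m = (\<Sum>h\<in>H. act h m)"

inductive_set zspan :: "'m::ab_group_add set \<Rightarrow> 'm set" for S where
  zspan_zero: "0 \<in> zspan S"
| zspan_gen: "s \<in> S \<Longrightarrow> s \<in> zspan S"
| zspan_add: "x \<in> zspan S \<Longrightarrow> y \<in> zspan S \<Longrightarrow> x + y \<in> zspan S"
| zspan_neg: "x \<in> zspan S \<Longrightarrow> - x \<in> zspan S"

definition augM :: "('a \<Rightarrow> 'm::ab_group_add \<Rightarrow> 'm) \<Rightarrow> 'a set \<Rightarrow> 'm set" where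
  "augM act H = zspan {act h m - m | h m. h \<in> H}"

definition quot_set :: "'m::ab_group_add set \<Rightarrow> 'm set \<Rightarrow> 'm set set" where
  "quot_set A B = (\<lambda>x. (\<lambda>b. x + b) ` B) ` A"

definition tate0 :: "('a \<Rightarrow> 'm::ab_group_add \<Rightarrow> 'm) \<Rightarrow> 'a set \<Rightarrow> 'm set set" where
  "tate0 act H = quot_set (fixpts act H) (range (normH act H))"

definition tate_m1 :: "('a \<Rightarrow> 'm::ab_group_add \<Rightarrow> 'm) \<Rightarrow> 'a set \<Rightarrow> 'm set set" where
  "tate_m1 act H = quot_set {m. normH act H m = 0} (augM act H)"

definition subgroups :: "('a, 'b) monoid_scheme \<Rightarrow> 'a set set" where
  "subgroups G = {H. subgroup H G}"

definition hhat0 :: "('a, 'b) monoid_scheme \<Rightarrow> ('a set \<Rightarrow> int) \<Rightarrow> ('a \<Rightarrow> 'm::ab_group_add \<Rightarrow> 'm) \<Rightarrow> rat" where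
  "hhat0 G n act = (\<Prod>H\<in>subgroups G. (of_nat (card (tate0 act H)) :: rat) powi n H)"

definition hhat_m1 :: "('a, 'b) monoid_scheme \<Rightarrow> ('a set \<Rightarrow> int) \<Rightarrow> ('a \<Rightarrow> 'm::ab_group_add \<Rightarrow> 'm) \<Rightarrow> rat" where
  "hhat_m1 G n act = (\<Prod>H\<in>subgroups G. (of_nat (card (tate_m1 act H)) :: rat) powi n H)"

text \<open>Regulator constant of a finite module: here \<open>M_tors = M\<close>, \<open>(M^H)_tf = 0\<close> and the
  determinant of the empty Gram matrix is 1, so the defining product reduces to
  \<open>\<Prod>_H |M^H|^{-2 n_H}\<close>.  The argument \<open>F\<close> is the set of \<open>H\<close>-fixed points.\<close>
definition reg_const_finite :: "('a, 'b) monoid_scheme \<Rightarrow> ('a set \<Rightarrow> int) \<Rightarrow> ('a set \<Rightarrow> 'x set) \<Rightarrow> rat" where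
  "reg_const_finite G n F = (\<Prod>H\<in>subgroups G. (of_nat (card (F H)) :: rat) powi (-2 * n H))"

definition dual_set :: "('m::ab_group_add \<Rightarrow> qz) set" where
  "dual_set = {\<psi>. \<forall>a b. \<psi> (a + b) = qz_add (\<psi> a) (\<psi> b)}"

definition dual_act :: "('a, 'b) monoid_scheme \<Rightarrow> ('a \<Rightarrow> 'm \<Rightarrow> 'm) \<Rightarrow> 'a \<Rightarrow> ('m \<Rightarrow> qz) \<Rightarrow> ('m \<Rightarrow> qz)" where
  "dual_act G act g \<psi> = (\<lambda>m. \<psi> (act (inv\<^bsub>G\<^esub> g) m))"

definition dual_fixpts :: "('a, 'b) monoid_scheme \<Rightarrow> ('a \<Rightarrow> 'm::ab_group_add \<Rightarrow> 'm) \<Rightarrow> 'a set \<Rightarrow> ('m \<Rightarrow> qz) set" where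
  "dual_fixpts G act H = {\<psi> \<in> dual_set. \<forall>h\<in>H. dual_act G act h \<psi> = \<psi>}"

text \<open>Basis of \<open>\<Oplus>_{s n_H > 0} Q[G/H]^{s n_H}\<close> (for \<open>s = \<plusminus>1\<close>): triples (H, copy index, left coset).\<close>
definition perm_basis :: "('a, 'b) monoid_scheme \<Rightarrow> ('a set \<Rightarrow> int) \<Rightarrow> int \<Rightarrow> ('a set \<times> nat \<times> 'a set) set" where
  "perm_basis G n s = {(H, i, c). subgroup H G \<and> int i < s * n H \<and>
                                  c \<in> {x <#\<^bsub>G\<^esub> H | x. x \<in> carrier G}}"

definition perm_space :: "('a, 'b) monoid_scheme \<Rightarrow> ('a set \<Rightarrow> int) \<Rightarrow> int \<Rightarrow> ('a set \<times> nat \<times> 'a set \<Rightarrow> rat) set" where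
  "perm_space G n s = {f. \<forall>b. b \<notin> perm_basis G n s \<longrightarrow> f b = 0}"

definition perm_act :: "('a, 'b) monoid_scheme \<Rightarrow> 'a \<Rightarrow> ('a set \<times> nat \<times> 'a set \<Rightarrow> rat) \<Rightarrow> ('a set \<times> nat \<times> 'a set \<Rightarrow> rat)" where
  "perm_act G g f = (\<lambda>(H, i, c). f (H, i, inv\<^bsub>G\<^esub> g <#\<^bsub>G\<^esub> c))"

definition brauer_relation :: "('a, 'b) monoid_scheme \<Rightarrow> ('a set \<Rightarrow> int) \<Rightarrow> bool" where
  "brauer_relation G n \<longleftrightarrow>
     (\<forall>H. n H \<noteq> 0 \<longrightarrow> subgroup H G) \<and>
     (\<exists>\<phi>. bij_betw \<phi> (perm_space G n 1) (perm_space G n (-1)) \<and>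
          (\<forall>f\<in>perm_space G n 1. \<forall>f'\<in>perm_space G n 1. \<phi> (\<lambda>b. f b + f' b) = (\<lambda>b. \<phi> f b + \<phi> f' b)) \<and>
          (\<forall>f\<in>perm_space G n 1. \<forall>a. \<phi> (\<lambda>b. a * f b) = (\<lambda>b. a * \<phi> f b)) \<and>
          (\<forall>g\<in>carrier G. \<forall>f\<in>perm_space G n 1. \<phi> (perm_act G g f) = perm_act G g (\<phi> f)))"

end

theory Submission
  imports Defs
begin

instantiation qz :: ab_group_add
begin
lift_definition zero_qz :: qz is "0::rat" .
definition plus_qz :: "qz \<Rightarrow> qz \<Rightarrow> qz" where "plus_qz = qz_add"
lift_definition uminus_qz :: "qz \<Rightarrow> qz" is "uminus :: rat \<Rightarrow> rat"
  unfolding qz_rel_def by (metis Ints_minus minus_diff_eq minus_diff_minus)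
lift_definition minus_qz :: "qz \<Rightarrow> qz \<Rightarrow> qz" is "(-) :: rat \<Rightarrow> rat \<Rightarrow> rat"
  unfolding qz_rel_def by (metis Ints_diff diff_diff_eq diff_add_eq add_diff_eq diff_diff_eq2 add.commute)
instance
proof
  fix a b c :: qz
  show "a + b + c = a + (b + c)" unfolding plus_qz_def by transfer (simp add: qz_rel_def add.assoc)
  show "a + b = b + a" unfolding plus_qz_def by transfer (simp add: qz_rel_def add.commute)
  show "0 + a = a" unfolding plus_qz_def by transfer (simp add: qz_rel_def)
  show "- a + a = 0" unfolding plus_qz_def by transfer (simp add: qz_rel_def)
  show "a - b = a + - b" unfolding plus_qz_def by transfer (simp add: qz_rel_def)
qed
end

lemma plus_qz_abs: "abs_qz x + abs_qz y = abs_qz (x + y)"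
  unfolding plus_qz_def by transfer (simp add: qz_rel_def)

lemma zero_qz_abs: "0 = abs_qz 0"
  by transfer (simp add: qz_rel_def)

fun nsm :: "nat \<Rightarrow> 'x::monoid_add \<Rightarrow> 'x" where
  "nsm 0 x = 0"
| "nsm (Suc k) x = x + nsm k x"

lemma nsm_qz: "nsm k (abs_qz q) = abs_qz (of_nat k * q)"
  by (induction k) (simp_all add: zero_qz_abs plus_qz_abs algebra_simps)

lemma qz_eq_iff: "abs_qz x = abs_qz y \<longleftrightarrow> x - y \<in> \<int>"
  by (simp add: qz.abs_eq_iff qz_rel_def)

lemma qz_surj: "\<exists>r. s = abs_qz r"
  by (induction s rule: qz.abs_induct) blast

lemma card_sol:
  assumes "k > 0"
  shows "card {t::qz. nsm k t = s} = k"
proof -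
  obtain r where r: "s = abs_qz r" using qz_surj by blast
  define f where "f i = abs_qz ((r + of_nat i) / of_nat k)" for i :: nat
  have "bij_betw f {..<k} {t::qz. nsm k t = s}"
  proof (rule bij_betwI')
    fix i j assume i: "i \<in> {..<k}" and j: "j \<in> {..<k}"
    show "(f i = f j) = (i = j)"
    proof
      assume "f i = f j"
      then have "(r + of_nat i) / of_nat k - (r + of_nat j) / of_nat k \<in> \<int>"
        unfolding f_def qz_eq_iff .
      also have "(r + of_nat i) / of_nat k - (r + of_nat j) / of_nat k = (of_int (int i - int j)) / of_nat k"
        by (simp add: diff_divide_distrib add_divide_distrib)
      finally obtain m where m: "(of_int (int i - int j)) / (of_nat k :: rat) = of_int m"
        by (metis Ints_cases)
      then have "of_int (int i - int j) = (of_int m * of_nat k :: rat)" using assms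
        by (simp add: divide_eq_eq)
      then have e: "int i - int j = m * int k"
        by (metis of_int_eq_iff of_int_mult of_int_of_nat_eq)
      have lt: "\<bar>int i - int j\<bar> < int k" using i j by auto
      have "m = 0"
      proof (rule ccontr)
        assume "m \<noteq> 0"
        then have "\<bar>m\<bar> * int k \<ge> int k" using assms by simp
        then show False using lt e by (simp add: abs_mult)
      qed
      then show "i = j" using e by simp
    qed simp
  next
    fix i assume "i \<in> {..<k}"
    have "nsm k (f i) = abs_qz (r + of_nat i)" unfolding f_def nsm_qz using assms by simp
    also have "\<dots> = s" unfolding r qz_eq_iff by simp
    finally show "f i \<in> {t. nsm k t = s}" by simp
  next
    fix t assume "t \<in> {t::qz. nsm k t = s}"
    then have t: "nsm k t = s" by simp
    obtain q where q: "t = abs_qz q" using qz_surj by blast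
    have "of_nat k * q - r \<in> \<int>" using t unfolding q r nsm_qz qz_eq_iff .
    then obtain m where m: "of_nat k * q - r = of_int m" by (metis Ints_cases)
    define i where "i = nat (m mod int k)"
    have mi: "m = int k * (m div int k) + int i" unfolding i_def using assms by simp
    have "q - (r + of_nat i) / of_nat k = of_int (m div int k)"
    proof -
      have "q = (r + of_int m) / of_nat k" using m assms by (simp add: field_simps)
      also have "of_int m = of_nat k * of_int (m div int k) + (of_nat i :: rat)"
        by (subst mi) simp
      finally show ?thesis using assms by (simp add: field_simps)
    qed
    then have "t = f i" unfolding q f_def qz_eq_iff by simp
    moreover have "i \<in> {..<k}" unfolding i_def using assms
      by (simp add: nat_less_iff)
    ultimately show "\<exists>i\<in>{..<k}. t = f i" by blast
  qed
  then show ?thesis by (simp add: bij_betw_same_card[symmetric])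
qed


definition addsub :: "'m::ab_group_add set \<Rightarrow> bool" where
  "addsub S \<longleftrightarrow> 0 \<in> S \<and> (\<forall>x\<in>S. \<forall>y\<in>S. x + y \<in> S) \<and> (\<forall>x\<in>S. -x \<in> S)"

definition homs :: "'m::ab_group_add set \<Rightarrow> 'm set \<Rightarrow> ('m \<Rightarrow> qz) set" where
  "homs C I = {\<psi>. (\<forall>x\<in>C. \<forall>y\<in>C. \<psi> (x+y) = \<psi> x + \<psi> y) \<and> (\<forall>x\<in>I. \<psi> x = 0) \<and> (\<forall>x. x \<notin> C \<longrightarrow> \<psi> x = 0)}"

definition ext :: "'m::ab_group_add set \<Rightarrow> 'm \<Rightarrow> 'm set" where
  "ext C a = {c + nsm j a | c j. c \<in> C}"

lemma nsm_add: "nsm (i + j) (x::'x::monoid_add) = nsm i x + nsm j x"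
  by (induction i) (simp_all add: add.assoc)

lemma nsm_distrib: "nsm k ((x::'x::comm_monoid_add) + y) = nsm k x + nsm k y"
  by (induction k) (simp_all add: algebra_simps)

lemma nsm_mult: "nsm (i * j) (x::'x::comm_monoid_add) = nsm i (nsm j x)"
  by (induction i) (simp_all add: nsm_add)

lemma nsm_one[simp]: "nsm 1 (x::'x::monoid_add) = x" by simp

lemma nsm_neg: "nsm k (- (x::'x::ab_group_add)) = - nsm k x"
  by (induction k) simp_all

lemma nsm_in: "addsub S \<Longrightarrow> x \<in> S \<Longrightarrow> nsm k x \<in> S"
  by (induction k) (auto simp: addsub_def)

lemma addsub_diff: "addsub S \<Longrightarrow> x \<in> S \<Longrightarrow> y \<in> S \<Longrightarrow> x - y \<in> S"
  unfolding addsub_def by (metis diff_conv_add_uminus)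

lemma hom_zero: "\<forall>x\<in>(C::'x::monoid_add set). \<forall>y\<in>C. \<psi> (x+y) = (\<psi> x :: 'y::ab_group_add) + \<psi> y \<Longrightarrow> 0 \<in> C \<Longrightarrow> \<psi> 0 = 0"
proof -
  assume a: "\<forall>x\<in>(C::'x::monoid_add set). \<forall>y\<in>C. \<psi> (x+y) = (\<psi> x :: 'y::ab_group_add) + \<psi> y" "0 \<in> C"
  then have "\<psi> (0 + 0) = \<psi> 0 + \<psi> 0" by blast
  then have e: "\<psi> 0 = \<psi> 0 + \<psi> 0" by (simp only: add.left_neutral)
  have "\<psi> 0 + \<psi> 0 = \<psi> 0 + 0" by (rule trans[OF e[symmetric] add_0_right[symmetric]])
  then show "\<psi> 0 = 0" by (rule add_left_imp_eq)
qed

lemma hom_nsm: "\<forall>x\<in>C. \<forall>y\<in>C. \<psi> (x+y) = (\<psi> x :: 'y::ab_group_add) + \<psi> y \<Longrightarrow> addsub C \<Longrightarrow> x \<in> C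
   \<Longrightarrow> \<psi> (nsm k x) = nsm k (\<psi> x)"
  apply (induction k)
   apply (simp add: hom_zero addsub_def)
  apply (simp add: nsm_in)
  done

lemma finite_order:
  fixes x :: "'m::{finite, ab_group_add}"
  shows "\<exists>n>0. nsm n x = 0"
proof -
  have "\<not> inj (\<lambda>i::nat. nsm i x)"
  proof
    assume "inj (\<lambda>i::nat. nsm i x)"
    then have "finite (UNIV :: nat set)"
      using finite_imageD[of "\<lambda>i::nat. nsm i x" UNIV] by simp
    then show False by simp
  qed
  then obtain i j where ij: "i \<noteq> j" "nsm i x = nsm j x" unfolding inj_def by blast
  have "\<exists>i j. i < j \<and> nsm i x = nsm j x"
  proof (cases "i < j")
    case True then show ?thesis using ij by blast
  next
    case False then have "j < i" using ij(1) by simp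
    then show ?thesis using ij(2)[symmetric] by blast
  qed
  then obtain i j where ij2: "i < j" "nsm i x = nsm j x" by blast
  have "nsm j x = nsm (j - i) x + nsm i x" using ij2(1) by (simp add: nsm_add[symmetric])
  then have "nsm (j - i) x + nsm i x = 0 + nsm i x" using ij2(2) by simp
  then have "nsm (j - i) x = 0" by (rule add_right_imp_eq)
  then show ?thesis using ij2(1) by (intro exI[of _ "j - i"]) simp
qed

lemma neg_nsm:
  fixes x :: "'m::{finite, ab_group_add}"
  shows "\<exists>k. - x = nsm k x"
proof -
  obtain n where n: "n > 0" "nsm n x = 0" using finite_order by blast
  have "x + nsm (n - 1) x = nsm n x" using n(1) by (cases n) auto
  then have "x + nsm (n - 1) x = 0" using n(2) by simp
  then have "- x = nsm (n - 1) x" by (simp add: add_eq_0_iff)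
  then show ?thesis by blast
qed

lemma addsub_ext:
  fixes C :: "'m::{finite, ab_group_add} set"
  assumes "addsub C"
  shows "addsub (ext C a)" "C \<subseteq> ext C a" "a \<in> ext C a"
proof -
  have z: "0 \<in> C" using assms by (simp add: addsub_def)
  show "C \<subseteq> ext C a" unfolding ext_def by (force intro: exI[of _ 0])
  show "a \<in> ext C a" unfolding ext_def using z by (force intro!: exI[of _ 1])
  show "addsub (ext C a)"
    unfolding addsub_def
  proof (intro conjI ballI)
    show "0 \<in> ext C a" unfolding ext_def using z by (force intro: exI[of _ 0])
  next
    fix x y assume "x \<in> ext C a" "y \<in> ext C a"
    then obtain c j c' j' where "c \<in> C" "c' \<in> C" "x = c + nsm j a" "y = c' + nsm j' a"
      unfolding ext_def by blast
    then have "x + y = (c + c') + nsm (j + j') a" "c + c' \<in> C"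
      using assms by (simp_all add: nsm_add algebra_simps addsub_def)
    then show "x + y \<in> ext C a" unfolding ext_def by blast
  next
    fix x assume "x \<in> ext C a"
    then obtain c j where "c \<in> C" "x = c + nsm j a"
      unfolding ext_def by blast
    obtain k where k: "- a = nsm k a" using neg_nsm by blast
    have "- x = (- c) + nsm (j * k) a"
      using \<open>x = _\<close> k by (simp add: nsm_mult nsm_neg[symmetric] mult.commute)
    moreover have "- c \<in> C" using assms \<open>c \<in> C\<close> by (auto simp: addsub_def)
    ultimately show "- x \<in> ext C a" unfolding ext_def by blast
  qed
qed

definition k0 :: "'m::ab_group_add set \<Rightarrow> 'm \<Rightarrow> nat" where
  "k0 C a = (LEAST k. k > 0 \<and> nsm k a \<in> C)"

lemma k0_props:
  fixes C :: "'m::{finite, ab_group_add} set"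
  assumes "addsub C"
  shows "k0 C a > 0" "nsm (k0 C a) a \<in> C" "\<And>j. 0 < j \<Longrightarrow> j < k0 C a \<Longrightarrow> nsm j a \<notin> C"
proof -
  obtain n where n: "n > 0" "nsm n a = 0" using finite_order by blast
  then have ex: "n > 0 \<and> nsm n a \<in> C" using assms by (simp add: addsub_def)
  show "k0 C a > 0" "nsm (k0 C a) a \<in> C" unfolding k0_def using LeastI[of "\<lambda>k. k > 0 \<and> nsm k a \<in> C" n, OF ex] by auto
  show "\<And>j. 0 < j \<Longrightarrow> j < k0 C a \<Longrightarrow> nsm j a \<notin> C" unfolding k0_def using not_less_Least by blast
qed

lemma nsm_mod:
  "nsm j (a::'m::comm_monoid_add) = nsm (j div k) (nsm k a) + nsm (j mod k) a"
proof -
  have "nsm j a = nsm ((j div k) * k + j mod k) a" by (simp only: div_mult_mod_eq)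
  also have "\<dots> = nsm (j div k) (nsm k a) + nsm (j mod k) a" by (simp only: nsm_add nsm_mult)
  finally show ?thesis .
qed

lemma ext_rep:
  fixes C :: "'m::{finite, ab_group_add} set"
  assumes "addsub C"
  shows "bij_betw (\<lambda>(c, j). c + nsm j a) (C \<times> {..<k0 C a}) (ext C a)"
  unfolding bij_betw_def
proof
  show "inj_on (\<lambda>(c, j). c + nsm j a) (C \<times> {..<k0 C a})"
  proof -
    have main: "c = c' \<and> j = j'" if "c \<in> C" "c' \<in> C" "j < k0 C a" "j' < k0 C a" "j \<le> j'"
      "c + nsm j a = c' + nsm j' a" for c c' j j'
    proof -
      have pr: "nsm j' a = nsm (j' - j) a + nsm j a" using that(5) by (simp add: nsm_add[symmetric])
      have "c + nsm j a = c' + nsm j' a" by (rule that(6))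
      also have "\<dots> = c' + (nsm (j' - j) a + nsm j a)" by (simp only: pr)
      also have "\<dots> = (c' + nsm (j' - j) a) + nsm j a" by (rule add.assoc[symmetric])
      finally have "c + nsm j a = (c' + nsm (j' - j) a) + nsm j a" .
      then have "c = c' + nsm (j' - j) a" by (rule add_right_imp_eq)
      then have "nsm (j' - j) a = c - c'" by (metis add_diff_cancel_left')
      then have "nsm (j' - j) a \<in> C" using addsub_diff[OF assms that(1,2)] by simp
      then have "j' - j = 0" using k0_props(3)[OF assms, where j="j' - j" and a=a] that by linarith
      then show ?thesis using \<open>c = _\<close> that(5) by simp
    qed
    show ?thesis unfolding inj_on_def
    proof (intro ballI impI)
      fix p q assume p: "p \<in> C \<times> {..<k0 C a}" and q: "q \<in> C \<times> {..<k0 C a}"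
        and e: "(case p of (c, j) \<Rightarrow> c + nsm j a) = (case q of (c, j) \<Rightarrow> c + nsm j a)"
      obtain c j c' j' where pq: "p = (c, j)" "q = (c', j')" by (cases p, cases q) blast
      have h: "c \<in> C" "c' \<in> C" "j < k0 C a" "j' < k0 C a" "c + nsm j a = c' + nsm j' a"
        using p q e unfolding pq by auto
      show "p = q"
      proof (cases "j \<le> j'")
        case True then show ?thesis using main[OF h(1-4) True h(5)] pq by simp
      next
        case False then show ?thesis using main[OF h(2,1,4,3) _ h(5)[symmetric]] pq by simp
      qed
    qed
  qed
  show "(\<lambda>(c, j). c + nsm j a) ` (C \<times> {..<k0 C a}) = ext C a"
  proof
    show "(\<lambda>(c, j). c + nsm j a) ` (C \<times> {..<k0 C a}) \<subseteq> ext C a" unfolding ext_def by auto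
    show "ext C a \<subseteq> (\<lambda>(c, j). c + nsm j a) ` (C \<times> {..<k0 C a})"
    proof
      fix x assume "x \<in> ext C a"
      then obtain c j where cj: "c \<in> C" "x = c + nsm j a" unfolding ext_def by blast
      let ?k = "k0 C a"
      have e: "x = (\<lambda>(c, j). c + nsm j a) (c + nsm (j div ?k) (nsm ?k a), j mod ?k)"
        unfolding cj(2) by (subst nsm_mod[of j a ?k]) (simp add: add.assoc)
      have "nsm (j div ?k) (nsm ?k a) \<in> C" by (rule nsm_in[OF assms k0_props(2)[OF assms]])
      then have "c + nsm (j div ?k) (nsm ?k a) \<in> C"
        using assms cj(1) unfolding addsub_def by blast
      moreover have "j mod ?k < ?k" using k0_props(1)[OF assms] by simp
      ultimately have "(c + nsm (j div ?k) (nsm ?k a), j mod ?k) \<in> C \<times> {..<k0 C a}" by simp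
      from e this show "x \<in> (\<lambda>(c, j). c + nsm j a) ` (C \<times> {..<k0 C a})" by (rule image_eqI)
    qed
  qed
qed

lemma card_ext:
  fixes C :: "'m::{finite, ab_group_add} set"
  assumes "addsub C"
  shows "card (ext C a) = card C * k0 C a"
  using bij_betw_same_card[OF ext_rep[OF assms, of a]] by (simp add: card_cartesian_product)


definition restr :: "'m set \<Rightarrow> ('m \<Rightarrow> qz) \<Rightarrow> ('m \<Rightarrow> qz)" where
  "restr C \<phi> = (\<lambda>x. if x \<in> C then \<phi> x else 0)"

lemma homs_base: "homs I I = {\<lambda>_. 0}"
proof
  show "homs I I \<subseteq> {\<lambda>_. 0}"
  proof
    fix \<psi> assume "\<psi> \<in> homs I I"
    then have "\<forall>x. \<psi> x = 0" unfolding homs_def by blast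
    then show "\<psi> \<in> {\<lambda>_. 0}" by auto
  qed
  show "{\<lambda>_. 0} \<subseteq> homs I I" unfolding homs_def by auto
qed

lemma homs_ext:
  fixes C :: "'m::{finite, ab_group_add} set"
  assumes C: "addsub C" and IC: "I \<subseteq> C" and fin: "finite (homs C I)"
  shows "finite (homs (ext C a) I) \<and> card (homs (ext C a) I) = card (homs C I) * k0 C a"
proof -
  define k where "k = k0 C a"
  define D where "D = ext C a"
  define f where "f = (\<lambda>(c, j). c + nsm j a)"
  define S where "S = Sigma (homs C I) (\<lambda>\<psi>. {t. nsm k t = \<psi> (nsm k a)})"
  define \<Phi> where "\<Phi> = (\<lambda>\<phi>. (restr C \<phi>, \<phi> a))"
  have D: "addsub D" "C \<subseteq> D" "a \<in> D" unfolding D_def using addsub_ext[OF C] by auto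
  have k: "k > 0" "nsm k a \<in> C" unfolding k_def using k0_props[OF C] by auto
  have bf: "bij_betw f (C \<times> {..<k}) D" unfolding f_def k_def D_def by (rule ext_rep[OF C])
  have Cadd: "x + y \<in> C" if "x \<in> C" "y \<in> C" for x y using C that unfolding addsub_def by blast
  have Dadd: "x + y \<in> D" if "x \<in> D" "y \<in> D" for x y using D(1) that unfolding addsub_def by blast
  have Dform: "\<exists>c j. c \<in> C \<and> x = c + nsm j a" if "x \<in> D" for x
    using that unfolding D_def ext_def by blast
  have inD: "c + nsm j a \<in> D" if "c \<in> C" for c j using that unfolding D_def ext_def by blast
  have homD: "\<forall>x\<in>D. \<forall>y\<in>D. \<phi> (x+y) = \<phi> x + \<phi> y" "\<forall>x\<in>I. \<phi> x = 0" "\<forall>x. x \<notin> D \<longrightarrow> \<phi> x = 0"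
    if "\<phi> \<in> homs D I" for \<phi> using that unfolding homs_def by auto
  have into: "\<Phi> \<phi> \<in> S" if "\<phi> \<in> homs D I" for \<phi>
  proof -
    note h = homD[OF that]
    have "restr C \<phi> \<in> homs C I"
      unfolding homs_def restr_def using h IC D(2) Cadd by (auto simp: subset_iff)
    moreover have "nsm k (\<phi> a) = restr C \<phi> (nsm k a)"
      using hom_nsm[OF h(1) D(1) D(3), of k] k(2) by (simp add: restr_def)
    ultimately show ?thesis unfolding \<Phi>_def S_def by simp
  qed
  have inj: "inj_on \<Phi> (homs D I)"
  proof (rule inj_onI)
    fix \<phi>1 \<phi>2 assume p1: "\<phi>1 \<in> homs D I" and p2: "\<phi>2 \<in> homs D I" and e: "\<Phi> \<phi>1 = \<Phi> \<phi>2"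
    note h1 = homD[OF p1] and h2 = homD[OF p2]
    have ea: "\<phi>1 a = \<phi>2 a" and eC: "restr C \<phi>1 = restr C \<phi>2" using e unfolding \<Phi>_def by auto
    show "\<phi>1 = \<phi>2"
    proof
      fix x show "\<phi>1 x = \<phi>2 x"
      proof (cases "x \<in> D")
        case False then show ?thesis using h1 h2 by simp
      next
        case True
        then obtain c j where cj: "c \<in> C" "x = c + nsm j a" using Dform by blast
        have cD: "c \<in> D" "nsm j a \<in> D" using cj D nsm_in by auto
        have "\<phi>1 c = \<phi>2 c" using fun_cong[OF eC, of c] cj by (simp add: restr_def)
        moreover have "\<phi>1 x = \<phi>1 c + nsm j (\<phi>1 a)"
          using h1(1) cD cj hom_nsm[OF h1(1) D(1) D(3)] by simp
        moreover have "\<phi>2 x = \<phi>2 c + nsm j (\<phi>2 a)"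
          using h2(1) cD cj hom_nsm[OF h2(1) D(1) D(3)] by simp
        ultimately show ?thesis using ea by simp
      qed
    qed
  qed
  have surj: "S \<subseteq> \<Phi> ` homs D I"
  proof
    fix p assume "p \<in> S"
    then obtain \<psi> t where p: "p = (\<psi>, t)" and \<psi>: "\<psi> \<in> homs C I" and t: "nsm k t = \<psi> (nsm k a)"
      unfolding S_def by blast
    have hC: "\<forall>x\<in>C. \<forall>y\<in>C. \<psi> (x+y) = \<psi> x + \<psi> y" "\<forall>x\<in>I. \<psi> x = 0" "\<forall>x. x \<notin> C \<longrightarrow> \<psi> x = 0"
      using \<psi> unfolding homs_def by auto
    define g where "g = the_inv_into (C \<times> {..<k}) f"
    define \<phi> where "\<phi> = (\<lambda>x. if x \<in> D then \<psi> (fst (g x)) + nsm (snd (g x)) t else 0)"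
    have key: "\<phi> (c + nsm j a) = \<psi> c + nsm j t" if "c \<in> C" for c j
    proof -
      let ?c = "c + nsm (j div k) (nsm k a)"
      have mem: "(?c, j mod k) \<in> C \<times> {..<k}"
        using Cadd[OF that nsm_in[OF C k(2)]] k(1) by simp
      have fx: "f (?c, j mod k) = c + nsm j a"
        unfolding f_def by (simp add: nsm_mod[of j a k] add.assoc)
      have "g (c + nsm j a) = (?c, j mod k)"
        unfolding g_def fx[symmetric]
        by (rule the_inv_into_f_f[OF bij_betw_imp_inj_on[OF bf] mem])
      then have "\<phi> (c + nsm j a) = \<psi> ?c + nsm (j mod k) t"
        unfolding \<phi>_def using inD[OF that] by simp
      also have "\<psi> ?c = \<psi> c + nsm (j div k) (\<psi> (nsm k a))"
        using hC(1) that nsm_in[OF C k(2)] hom_nsm[OF hC(1) C k(2)] by simp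
      also have "\<psi> (nsm k a) = nsm k t" using t by simp
      also have "\<psi> c + nsm (j div k) (nsm k t) + nsm (j mod k) t = \<psi> c + nsm j t"
        by (subst nsm_mod[of j t k]) (simp add: add.assoc)
      finally show ?thesis .
    qed
    have \<psi>0: "\<psi> 0 = 0" using hom_zero[OF hC(1)] C by (simp add: addsub_def)
    have "\<phi> \<in> homs D I"
      unfolding homs_def
    proof (intro CollectI conjI ballI allI impI)
      fix x y assume "x \<in> D" "y \<in> D"
      then obtain c1 j1 c2 j2 where c: "c1 \<in> C" "x = c1 + nsm j1 a" "c2 \<in> C" "y = c2 + nsm j2 a"
        using Dform by blast
      have xy: "x + y = (c1 + c2) + nsm (j1 + j2) a" using c by (simp add: nsm_add algebra_simps)
      have "\<phi> (x + y) = \<psi> (c1 + c2) + nsm (j1 + j2) t" unfolding xy by (rule key[OF Cadd[OF c(1) c(3)]])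
      also have "\<dots> = (\<psi> c1 + nsm j1 t) + (\<psi> c2 + nsm j2 t)"
        using hC(1) c by (simp add: nsm_add algebra_simps)
      also have "\<dots> = \<phi> x + \<phi> y" using key c by simp
      finally show "\<phi> (x + y) = \<phi> x + \<phi> y" .
    next
      fix x assume "x \<in> I"
      then have "x \<in> C" using IC by auto
      then show "\<phi> x = 0" using key[of x 0] hC(2) \<open>x \<in> I\<close> by simp
    next
      fix x assume "x \<notin> D" then show "\<phi> x = 0" unfolding \<phi>_def by simp
    qed
    moreover have "\<Phi> \<phi> = p"
    proof -
      have "restr C \<phi> = \<psi>"
      proof
        fix x show "restr C \<phi> x = \<psi> x"
          using key[of x 0] hC(3) by (auto simp: restr_def)
      qed
      moreover have "\<phi> a = t" using key[of 0 1] \<psi>0 C by (simp add: addsub_def)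
      ultimately show ?thesis unfolding \<Phi>_def p by simp
    qed
    ultimately show "p \<in> \<Phi> ` homs D I" by blast
  qed
  have bij: "bij_betw \<Phi> (homs D I) S"
    unfolding bij_betw_def using inj into surj by blast
  have solfin: "finite {t. nsm k t = \<psi> (nsm k a)}" "card {t. nsm k t = \<psi> (nsm k a)} = k" for \<psi> :: "'m \<Rightarrow> qz"
    using card_sol[OF k(1)] by (auto intro: card_ge_0_finite simp: k(1))
  have finS: "finite S" unfolding S_def using fin solfin by blast
  have "card S = card (homs C I) * k"
    unfolding S_def using fin solfin by (simp add: card_SigmaI)
  then show ?thesis
    using bij_betw_same_card[OF bij] bij_betw_finite[OF bij] finS
    unfolding D_def k_def by simp
qed

lemma homs_iter:
  fixes I :: "'m::{finite, ab_group_add} set"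
  assumes I: "addsub I"
  shows "addsub (foldr (\<lambda>a C. ext C a) xs I) \<and> I \<subseteq> foldr (\<lambda>a C. ext C a) xs I
    \<and> set xs \<subseteq> foldr (\<lambda>a C. ext C a) xs I
    \<and> finite (homs (foldr (\<lambda>a C. ext C a) xs I) I)
    \<and> card (homs (foldr (\<lambda>a C. ext C a) xs I) I) * card I = card (foldr (\<lambda>a C. ext C a) xs I)"
proof (induction xs)
  case Nil
  then show ?case using I by (simp add: homs_base)
next
  case (Cons x xs)
  define C where "C = foldr (\<lambda>a C. ext C a) xs I"
  have IH: "addsub C" "I \<subseteq> C" "set xs \<subseteq> C" "finite (homs C I)" "card (homs C I) * card I = card C"
    using Cons unfolding C_def by auto
  have e: "foldr (\<lambda>a C. ext C a) (x # xs) I = ext C x" unfolding C_def by simp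
  have E: "addsub (ext C x)" "C \<subseteq> ext C x" "x \<in> ext C x" using addsub_ext[OF IH(1)] by auto
  have H: "finite (homs (ext C x) I)" "card (homs (ext C x) I) = card (homs C I) * k0 C x"
    using homs_ext[OF IH(1) IH(2) IH(4)] by auto
  have "card (homs (ext C x) I) * card I = card (ext C x)"
    using H(2) IH(5) card_ext[OF IH(1), of x] by (simp add: algebra_simps)
  then show ?case unfolding e using E IH H by auto
qed

lemma homs_UNIV:
  fixes I :: "'m::{finite, ab_group_add} set"
  assumes I: "addsub I"
  shows "card (homs UNIV I) * card I = card (UNIV :: 'm set)"
proof -
  obtain xs :: "'m list" where xs: "set xs = UNIV" using finite_list[of "UNIV :: 'm set"] finite_UNIV by blast
  have "foldr (\<lambda>a C. ext C a) xs I = UNIV" using homs_iter[OF I, of xs] xs by auto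
  then show ?thesis using homs_iter[OF I, of xs] by simp
qed


lemma card_fibers:
  assumes "finite A" "\<And>x. x \<in> A \<Longrightarrow> card {x'\<in>A. f x' = f x} = k"
  shows "card A = k * card (f ` A)"
proof -
  define P where "P = (\<lambda>y. {x\<in>A. f x = y}) ` (f ` A)"
  have U: "\<Union>P = A" unfolding P_def by auto
  have inj: "inj_on (\<lambda>y. {x\<in>A. f x = y}) (f ` A)"
    by (rule inj_onI) blast
  have cP: "card P = card (f ` A)" unfolding P_def using card_image[OF inj] .
  have "k * card P = card (\<Union>P)"
  proof (rule card_partition)
    show "finite P" unfolding P_def using assms(1) by simp
    show "finite (\<Union>P)" using U assms(1) by simp
    show "card c = k" if "c \<in> P" for c using that unfolding P_def using assms(2) by auto
    show "c1 \<inter> c2 = {}" if "c1 \<in> P" "c2 \<in> P" "c1 \<noteq> c2" for c1 c2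
      using that unfolding P_def by auto
  qed
  then show ?thesis using U cP by simp
qed

lemma coset_shift:
  assumes "addsub B" "b \<in> B"
  shows "(\<lambda>y. (x::'m::ab_group_add) + b + y) ` B = (\<lambda>y. x + y) ` B"
proof
  show "(\<lambda>y. x + b + y) ` B \<subseteq> (\<lambda>y. x + y) ` B"
  proof
    fix z assume "z \<in> (\<lambda>y. x + b + y) ` B"
    then obtain y where "y \<in> B" "z = x + b + y" by blast
    moreover have "b + y \<in> B" using assms \<open>y \<in> B\<close> unfolding addsub_def by blast
    ultimately show "z \<in> (\<lambda>y. x + y) ` B" by (auto simp: add.assoc)
  qed
  show "(\<lambda>y. x + y) ` B \<subseteq> (\<lambda>y. x + b + y) ` B"
  proof
    fix z assume "z \<in> (\<lambda>y. x + y) ` B"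
    then obtain y where "y \<in> B" "z = x + y" by blast
    moreover have "y - b \<in> B" using assms \<open>y \<in> B\<close> by (simp add: addsub_diff)
    moreover have "z = x + b + (y - b)" using \<open>z = x + y\<close> by simp
    ultimately show "z \<in> (\<lambda>y. x + b + y) ` B" by blast
  qed
qed

lemma quot_card:
  fixes A B :: "'m::{finite, ab_group_add} set"
  assumes B: "addsub B" and BA: "\<And>x b. x \<in> A \<Longrightarrow> b \<in> B \<Longrightarrow> x + b \<in> A"
  shows "card (quot_set A B) * card B = card A"
proof -
  have fib: "{x'\<in>A. (\<lambda>b. x' + b) ` B = (\<lambda>b. x + b) ` B} = (\<lambda>b. x + b) ` B" if "x \<in> A" for x
  proof
    show "{x'\<in>A. (\<lambda>b. x' + b) ` B = (\<lambda>b. x + b) ` B} \<subseteq> (\<lambda>b. x + b) ` B"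
    proof
      fix x' assume "x' \<in> {x'\<in>A. (\<lambda>b. x' + b) ` B = (\<lambda>b. x + b) ` B}"
      then have "(\<lambda>b. x' + b) ` B = (\<lambda>b. x + b) ` B" by blast
      moreover have "x' \<in> (\<lambda>b. x' + b) ` B" using B unfolding addsub_def by force
      ultimately show "x' \<in> (\<lambda>b. x + b) ` B" by simp
    qed
    show "(\<lambda>b. x + b) ` B \<subseteq> {x'\<in>A. (\<lambda>b. x' + b) ` B = (\<lambda>b. x + b) ` B}"
    proof
      fix z assume "z \<in> (\<lambda>b. x + b) ` B"
      then obtain b where b: "b \<in> B" "z = x + b" by blast
      then show "z \<in> {x'\<in>A. (\<lambda>b. x' + b) ` B = (\<lambda>b. x + b) ` B}"
        using coset_shift[OF B b(1), of x] BA[OF that b(1)] by simp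
    qed
  qed
  have "card A = card B * card ((\<lambda>x. (\<lambda>b. x + b) ` B) ` A)"
  proof (rule card_fibers)
    show "finite A" by simp
    fix x assume "x \<in> A"
    show "card {x'\<in>A. (\<lambda>b. x' + b) ` B = (\<lambda>b. x + b) ` B} = card B"
      unfolding fib[OF \<open>x \<in> A\<close>] by (simp add: card_image)
  qed
  then show ?thesis unfolding quot_set_def by simp
qed

lemma kernel_card:
  fixes h :: "'m::{finite, ab_group_add} \<Rightarrow> 'n::ab_group_add"
  assumes h: "\<And>x y. h (x + y) = h x + h y"
  shows "card {x. h x = 0} * card (range h) = card (UNIV :: 'm set)"
proof -
  have h0: "h 0 = 0" using hom_zero[of UNIV h] h by simp
  have hd: "h (x - y) = h x - h y" for x y
    using h[of "x - y" y] by (simp add: algebra_simps)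
  have fib: "{x'\<in>UNIV. h x' = h x} = (\<lambda>k. x + k) ` {x. h x = 0}" for x
  proof
    show "{x'\<in>UNIV. h x' = h x} \<subseteq> (\<lambda>k. x + k) ` {x. h x = 0}"
    proof
      fix x' assume "x' \<in> {x'\<in>UNIV. h x' = h x}"
      then have "h (x' - x) = 0" using hd by simp
      moreover have "x' = x + (x' - x)" by simp
      ultimately show "x' \<in> (\<lambda>k. x + k) ` {x. h x = 0}" by blast
    qed
    show "(\<lambda>k. x + k) ` {x. h x = 0} \<subseteq> {x'\<in>UNIV. h x' = h x}" using h by auto
  qed
  have "card (UNIV :: 'm set) = card {x. h x = 0} * card (h ` UNIV)"
  proof (rule card_fibers)
    show "finite (UNIV :: 'm set)" by simp
    fix x :: 'm
    show "card {x'\<in>UNIV. h x' = h x} = card {x. h x = 0}"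
      unfolding fib by (simp add: card_image)
  qed
  then show ?thesis by simp
qed


lemma powi_aux: "(a::rat) \<noteq> 0 \<Longrightarrow> b \<noteq> 0 \<Longrightarrow> a powi (-2*n) / b powi (-2*n) = ((b/a) powi n)^2"
  by (metis (mono_tags, opaque_lifting) divide_divide_eq_right mult.commute
    mult_cancel_right2 power_int_divide_distrib power_int_minus_divide
    power_int_mult power_int_numeral)

lemma hom_diff:
  assumes "\<And>x y. \<psi> (x + y) = (\<psi> x :: 'y::ab_group_add) + \<psi> y"
  shows "\<psi> ((x::'x::ab_group_add) - y) = \<psi> x - \<psi> y"
  using assms[of "x - y" y] by (simp add: algebra_simps)

lemma hom_neg:
  assumes "\<And>x y. \<psi> (x + y) = (\<psi> x :: 'y::ab_group_add) + \<psi> y"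
  shows "\<psi> (- (x::'x::ab_group_add)) = - \<psi> x"
  using hom_diff[of \<psi> 0 x, OF assms] hom_zero[of UNIV \<psi>] assms by simp

lemma per_H:
  fixes G :: "('a, 'b) monoid_scheme"
    and act :: "'a \<Rightarrow> 'm::{ab_group_add, finite} \<Rightarrow> 'm"
  assumes grp: "group G" and sub: "subgroup H G" and fin: "finite (carrier G)"
    and mod: "is_ZG_module G act"
  shows "card (dual_fixpts G act H) * card (tate0 act H) = card (tate_m1 act H) * card (fixpts act H)"
    "card (dual_fixpts G act H) > 0" "card (tate0 act H) > 0" "card (tate_m1 act H) > 0"
    "card (fixpts act H) > 0"
proof -
  interpret G: group G by (rule grp)
  interpret H: subgroup H G by (rule sub)
  have Hc: "H \<subseteq> carrier G" by (rule H.subset)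
  have finH: "finite H" using Hc fin finite_subset by blast
  have aadd: "act g (x + y) = act g x + act g y" if "g \<in> H" for g x y
    using mod Hc that unfolding is_ZG_module_def by blast
  have amul: "act (g \<otimes>\<^bsub>G\<^esub> h) x = act g (act h x)" if "g \<in> H" "h \<in> H" for g h x
    using mod Hc that unfolding is_ZG_module_def by blast
  have a0: "act g 0 = 0" if "g \<in> H" for g using hom_zero[of UNIV "act g"] aadd[OF that] by simp
  have aneg: "act g (- x) = - act g x" if "g \<in> H" for g x using hom_neg[of "act g", OF aadd[OF that]] .
  have asum: "act g (\<Sum>h\<in>H. f h) = (\<Sum>h\<in>H. act g (f h))" if "g \<in> H" for g f
    using sum_comp_morphism[of "act g" f H, OF a0[OF that] aadd[OF that]] by (simp add: comp_def)
  have bijr: "bij_betw (\<lambda>h'. h' \<otimes>\<^bsub>G\<^esub> h) H H" if "h \<in> H" for h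
  proof (rule bij_betwI[where g="\<lambda>x. x \<otimes>\<^bsub>G\<^esub> inv\<^bsub>G\<^esub> h"])
    show "(\<lambda>h'. h' \<otimes>\<^bsub>G\<^esub> h) \<in> H \<rightarrow> H" using that by auto
    show "(\<lambda>x. x \<otimes>\<^bsub>G\<^esub> inv\<^bsub>G\<^esub> h) \<in> H \<rightarrow> H" using that by auto
    show "x \<otimes>\<^bsub>G\<^esub> h \<otimes>\<^bsub>G\<^esub> inv\<^bsub>G\<^esub> h = x" if "x \<in> H" for x
      using \<open>h \<in> H\<close> that Hc by (simp add: G.m_assoc subsetD)
    show "y \<otimes>\<^bsub>G\<^esub> inv\<^bsub>G\<^esub> h \<otimes>\<^bsub>G\<^esub> h = y" if "y \<in> H" for y
      using \<open>h \<in> H\<close> that Hc by (simp add: G.m_assoc subsetD)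
  qed
  have bijl: "bij_betw (\<lambda>h'. h \<otimes>\<^bsub>G\<^esub> h') H H" if "h \<in> H" for h
  proof (rule bij_betwI[where g="\<lambda>x. inv\<^bsub>G\<^esub> h \<otimes>\<^bsub>G\<^esub> x"])
    show "(\<lambda>h'. h \<otimes>\<^bsub>G\<^esub> h') \<in> H \<rightarrow> H" using that by auto
    show "(\<lambda>x. inv\<^bsub>G\<^esub> h \<otimes>\<^bsub>G\<^esub> x) \<in> H \<rightarrow> H" using that by auto
    show "inv\<^bsub>G\<^esub> h \<otimes>\<^bsub>G\<^esub> (h \<otimes>\<^bsub>G\<^esub> x) = x" if "x \<in> H" for x
      using \<open>h \<in> H\<close> that Hc by (simp add: G.m_assoc[symmetric] subsetD)
    show "h \<otimes>\<^bsub>G\<^esub> (inv\<^bsub>G\<^esub> h \<otimes>\<^bsub>G\<^esub> y) = y" if "y \<in> H" for y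
      using \<open>h \<in> H\<close> that Hc by (simp add: G.m_assoc[symmetric] subsetD)
  qed
  define N where "N = normH act H"
  have Nadd: "N (x + y) = N x + N y" for x y
    unfolding N_def normH_def by (simp add: aadd sum.distrib)
  have N0: "N 0 = 0" using hom_zero[of UNIV N] Nadd by simp
  have Nneg: "N (- x) = - N x" for x using hom_neg[of N, OF Nadd] .
  have Ndiff: "N (x - y) = N x - N y" for x y using hom_diff[of N, OF Nadd] .
  define K where "K = {m. N m = 0}"
  define R where "R = range N"
  define F where "F = fixpts act H"
  define I where "I = augM act H"
  have addI: "addsub I" unfolding I_def augM_def addsub_def
    by (auto intro: zspan.intros)
  have addK: "addsub K" unfolding K_def addsub_def using N0 Nadd Nneg by auto
  have addR: "addsub R" unfolding R_def addsub_def
  proof (intro conjI ballI)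
    show "0 \<in> range N" using N0 by (metis rangeI)
    fix x y assume "x \<in> range N" "y \<in> range N"
    then obtain u v where "x = N u" "y = N v" by blast
    then show "x + y \<in> range N" using Nadd[of u v] by (metis rangeI)
  next
    fix x assume "x \<in> range N"
    then obtain u where "x = N u" by blast
    then show "- x \<in> range N" using Nneg[of u] by (metis rangeI)
  qed
  have addF: "addsub F" unfolding F_def fixpts_def addsub_def using a0 aadd aneg by auto
  have gen: "N (act h m) = N m" if "h \<in> H" for h m
  proof -
    have "N (act h m) = (\<Sum>h'\<in>H. act (h' \<otimes>\<^bsub>G\<^esub> h) m)"
      unfolding N_def normH_def using amul that by simp
    also have "\<dots> = N m" unfolding N_def normH_def
      by (rule sum.reindex_bij_betw[OF bijr[OF that]])
    finally show ?thesis .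
  qed
  have IK: "I \<subseteq> K"
  proof
    fix x assume "x \<in> I"
    then show "x \<in> K" unfolding I_def augM_def
    proof (induction rule: zspan.induct)
      case zspan_zero then show ?case using addK by (simp add: addsub_def)
    next
      case (zspan_gen s)
      then obtain h m where "h \<in> H" "s = act h m - m" by blast
      then show ?case unfolding K_def using gen Ndiff by simp
    next
      case (zspan_add x y) then show ?case using addK by (simp add: addsub_def)
    next
      case (zspan_neg x) then show ?case using addK by (simp add: addsub_def)
    qed
  qed
  have RF: "R \<subseteq> F"
  proof
    fix x assume "x \<in> R"
    then obtain m where m: "x = N m" unfolding R_def by blast
    have "act g (N m) = N m" if "g \<in> H" for g
    proof -
      have "act g (N m) = (\<Sum>h\<in>H. act (g \<otimes>\<^bsub>G\<^esub> h) m)"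
        unfolding N_def normH_def using asum[OF that] amul that by simp
      also have "\<dots> = N m" unfolding N_def normH_def
        by (rule sum.reindex_bij_betw[OF bijl[OF that]])
      finally show ?thesis .
    qed
    then show "x \<in> F" unfolding F_def fixpts_def m by blast
  qed
  have Deq: "dual_fixpts G act H = homs UNIV I"
  proof
    show "dual_fixpts G act H \<subseteq> homs UNIV I"
    proof
      fix \<psi> assume "\<psi> \<in> dual_fixpts G act H"
      then have add: "\<And>x y. \<psi> (x + y) = \<psi> x + \<psi> y"
        and fx: "\<And>h. h \<in> H \<Longrightarrow> (\<lambda>m. \<psi> (act (inv\<^bsub>G\<^esub> h) m)) = \<psi>"
        unfolding dual_fixpts_def dual_set_def dual_act_def plus_qz_def by auto
      have fix2: "\<psi> (act h m) = \<psi> m" if "h \<in> H" for h m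
      proof -
        have "inv\<^bsub>G\<^esub> h \<in> H" using that by simp
        from fun_cong[OF fx[OF this], of m] show ?thesis
          using that Hc by (simp add: subsetD)
      qed
      have "\<psi> x = 0" if "x \<in> I" for x
        using that unfolding I_def augM_def
      proof (induction rule: zspan.induct)
        case zspan_zero then show ?case using hom_zero[of UNIV \<psi>] add by simp
      next
        case (zspan_gen s)
        then obtain h m where "h \<in> H" "s = act h m - m" by blast
        then show ?case using fix2 hom_diff[of \<psi>, OF add] by simp
      next
        case (zspan_add x y) then show ?case using add by simp
      next
        case (zspan_neg x) then show ?case using hom_neg[of \<psi>, OF add] by simp
      qed
      then show "\<psi> \<in> homs UNIV I" unfolding homs_def using add by auto
    qed
    show "homs UNIV I \<subseteq> dual_fixpts G act H"
    proof
      fix \<psi> assume "\<psi> \<in> homs UNIV I"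
      then have add: "\<And>x y. \<psi> (x + y) = \<psi> x + \<psi> y" and van: "\<And>x. x \<in> I \<Longrightarrow> \<psi> x = 0"
        unfolding homs_def by auto
      have "(\<lambda>m. \<psi> (act (inv\<^bsub>G\<^esub> h) m)) = \<psi>" if "h \<in> H" for h
      proof
        fix m
        have "inv\<^bsub>G\<^esub> h \<in> H" using that by simp
        then have "act (inv\<^bsub>G\<^esub> h) m - m \<in> I" unfolding I_def augM_def by (blast intro: zspan.intros)
        then have "\<psi> (act (inv\<^bsub>G\<^esub> h) m - m) = 0" by (rule van)
        then have "\<psi> (act (inv\<^bsub>G\<^esub> h) m) - \<psi> m = 0" unfolding hom_diff[of \<psi>, OF add] .
        then show "\<psi> (act (inv\<^bsub>G\<^esub> h) m) = \<psi> m" by simp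
      qed
      then show "\<psi> \<in> dual_fixpts G act H"
        unfolding dual_fixpts_def dual_set_def dual_act_def plus_qz_def[symmetric] using add by auto
    qed
  qed
  have c1: "card (homs UNIV I) * card I = card (UNIV :: 'm set)" by (rule homs_UNIV[OF addI])
  have c2: "card (tate_m1 act H) * card I = card K"
    unfolding tate_m1_def K_def[symmetric] N_def[symmetric] I_def[symmetric]
    by (rule quot_card[OF addI]) (use IK addK in \<open>auto simp: addsub_def\<close>)
  have c3: "card (tate0 act H) * card R = card F"
    unfolding tate0_def R_def[symmetric] N_def[symmetric] F_def[symmetric]
    by (rule quot_card[OF addR]) (use RF addF in \<open>auto simp: addsub_def\<close>)
  have c4: "card K * card R = card (UNIV :: 'm set)"
    unfolding K_def R_def by (rule kernel_card[OF Nadd])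
  have pU: "card (UNIV :: 'm set) > 0" by (simp add: card_gt_0_iff)
  have pI: "card I > 0" using addI by (auto simp: card_gt_0_iff addsub_def)
  have pR: "card R > 0" using addR by (auto simp: card_gt_0_iff addsub_def)
  have pF: "card F > 0" using addF by (auto simp: card_gt_0_iff addsub_def)
  have pK: "card K > 0" using addK by (auto simp: card_gt_0_iff addsub_def)
  let ?D = "card (dual_fixpts G act H)" and ?T0 = "card (tate0 act H)" and ?T1 = "card (tate_m1 act H)"
  have c1': "?D * card I = card (UNIV :: 'm set)" using c1 Deq by simp
  have "?D * ?T0 * (card I * card R) = (?D * card I) * (?T0 * card R)" by (simp add: ac_simps)
  also have "\<dots> = card (UNIV :: 'm set) * card F" using c1' c3 by simp
  also have "\<dots> = (card K * card R) * card F" using c4 by simp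
  also have "\<dots> = (?T1 * card I) * card F * card R" using c2 by (simp add: ac_simps)
  also have "\<dots> = ?T1 * card F * (card I * card R)" by (simp add: ac_simps)
  finally show "?D * ?T0 = ?T1 * card (fixpts act H)"
    using pI pR unfolding F_def by force
  show "?D > 0" using c1' pU by (metis gr0I mult_0)
  show "?T0 > 0" using c3 pF by (metis gr0I mult_0)
  show "?T1 > 0" using c2 pK by (metis gr0I mult_0)
  show "card (fixpts act H) > 0" using pF unfolding F_def .
qed

theorem mainTheorem6:
  fixes G :: "('a, 'b) monoid_scheme"
    and n :: "'a set \<Rightarrow> int"
    and act :: "'a \<Rightarrow> 'm::{ab_group_add, finite} \<Rightarrow> 'm"
  assumes "group G" and "finite (carrier G)"
    and "brauer_relation G n"
    and "is_ZG_module G act"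
  shows "reg_const_finite G n (fixpts act) / reg_const_finite G n (dual_fixpts G act)
         = (hhat_m1 G n act / hhat0 G n act) ^ 2"
proof -
  define a where "a H = (of_nat (card (fixpts act H)) :: rat)" for H
  define b where "b H = (of_nat (card (dual_fixpts G act H)) :: rat)" for H
  define c where "c H = (of_nat (card (tate_m1 act H)) :: rat)" for H
  define d where "d H = (of_nat (card (tate0 act H)) :: rat)" for H
  have per: "a H powi (-2 * n H) / b H powi (-2 * n H) = (c H powi n H / d H powi n H)^2"
    if "H \<in> subgroups G" for H
  proof -
    have sH: "subgroup H G" using that by (simp add: subgroups_def)
    note p = per_H[OF assms(1) sH assms(2) assms(4)]
    have nz: "a H \<noteq> 0" "b H \<noteq> 0" "c H \<noteq> 0" "d H \<noteq> 0"
      unfolding a_def b_def c_def d_def using p by auto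
    have "b H * d H = c H * a H" unfolding a_def b_def c_def d_def
      using p(1) by (metis of_nat_mult)
    then have "b H / a H = c H / d H" using nz by (simp add: field_simps)
    then show ?thesis using powi_aux[OF nz(1,2), of "n H"] by (simp add: power_int_divide_distrib)
  qed
  have "reg_const_finite G n (fixpts act) / reg_const_finite G n (dual_fixpts G act)
     = (\<Prod>H\<in>subgroups G. a H powi (-2 * n H) / b H powi (-2 * n H))"
    unfolding reg_const_finite_def a_def b_def by (simp add: prod_dividef)
  also have "\<dots> = (\<Prod>H\<in>subgroups G. (c H powi n H / d H powi n H)^2)"
    using per by (rule prod.cong[OF refl])
  also have "\<dots> = (\<Prod>H\<in>subgroups G. c H powi n H / d H powi n H)^2"
    by (simp add: prod_power_distrib)
  also have "\<dots> = (hhat_m1 G n act / hhat0 G n act) ^ 2"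
    unfolding hhat_m1_def hhat0_def c_def d_def by (simp add: prod_dividef)
  finally show ?thesis .
qed

end
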